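(* Let $\psi:\mathbb{R}_{>0}\to\mathbb{R}_{>0}$ be monotonic with $\psi(h)\to0$, and let $0<\varepsilon<1$. There exist constants $c_1,c_2>0$ (depending only on $\varepsilon$) such that for every open disc $B\subset[\varepsilon,1]^2$ of radius $r<1$ there is $H_0=H_0(B)$ such that for all $(a,b)\in\mathbb{Z}_{\ge0}^2$ with $h_{a,b}\ge H_0$, \[ c_1|B|\frac{\psi(h_{a,b})}{h_{a,b}}\le|\sigma_{a,b}\cap B|\le c_2|B|\frac{\psi(h_{a,b})}{h_{a,b}}. \] Moreover, for such $(a,b)$, every $c\in\mathbb{Z}_{\ge0}$ with $\sigma_{a,b}(c)\cap B\neq\emptyset$ satisfies $\tfrac{\varepsilon}{2}h_{a,b}<c<2h_{a,b}$.
   Context: For $(a,b)\in\mathbb{Z}_{\ge0}^2$, $h_{a,b}=\max(a,b)$. For $c\in\mathbb{Z}_{\ge0}$ define $\sigma_{a,b}(c)=\{(x,y)\in[0,1]^2:|a^2x+b^2y-c^2|<\psi(h_{a,b})\}$ and $\sigma_{a,b}=\bigcup_{c\in\mathbb{Z}_{\ge0}}\sigma_{a,b}(c)$. $|\cdot|$ is Lebesgue measure on $\mathbb{R}^2$. *)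

theory Defs
  imports "HOL-Analysis.Analysis"
begin

definition hab :: "nat \<Rightarrow> nat \<Rightarrow> nat" where
  "hab a b = max a b"

definition sigma_c :: "(real \<Rightarrow> real) \<Rightarrow> nat \<Rightarrow> nat \<Rightarrow> nat \<Rightarrow> (real \<times> real) set" where
  "sigma_c \<psi> a b c = {(x, y). x \<in> {0..1} \<and> y \<in> {0..1} \<and>
      \<bar>real a ^ 2 * x + real b ^ 2 * y - real c ^ 2\<bar> < \<psi> (real (hab a b))}"

definition sigma :: "(real \<Rightarrow> real) \<Rightarrow> nat \<Rightarrow> nat \<Rightarrow> (real \<times> real) set" where
  "sigma \<psi> a b = (\<Union>c. sigma_c \<psi> a b c)"

end

theory Submission
  imports Defs
begin

definition sect :: "real \<Rightarrow> nat \<Rightarrow> real \<Rightarrow> real \<Rightarrow> real \<Rightarrow> real set" where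
  "sect k n p y0 y1 = {y. y0 \<le> y \<and> y \<le> y1 \<and> (\<exists>c::nat. \<bar>k + real n ^ 2 * y - real c ^ 2\<bar> < p)}"

lemma sect_sets[measurable]: "sect k n p y0 y1 \<in> sets lborel"
proof -
  have "sect k n p y0 y1 = {y0..y1} \<inter> (\<Union>c::nat. {y. \<bar>k + real n ^ 2 * y - real c ^ 2\<bar> < p})"
    unfolding sect_def by auto
  also have "\<dots> \<in> sets lborel"
  proof (intro sets.Int sets.countable_UN')
    show "countable (UNIV::nat set)" by simp
    show "{y0..y1} \<in> sets lborel" by simp
    show "(\<lambda>c::nat. {y. \<bar>k + real n ^ 2 * y - real c ^ 2\<bar> < p}) ` UNIV \<subseteq> sets lborel"
    proof clarify
    fix c :: nat
    have "open {y::real. \<bar>k + real n ^ 2 * y - real c ^ 2\<bar> < p}"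
      by (intro open_Collect_less continuous_intros continuous_on_const)
    then show "{y::real. \<bar>k + real n ^ 2 * y - real c ^ 2\<bar> < p} \<in> sets lborel" by simp
  qed
  qed
  finally show ?thesis .
qed

lemma sect_fmeas: "sect k n p y0 y1 \<in> fmeasurable lborel"
  proof (rule fmeasurableI2[of "cbox y0 y1"])
  show "cbox y0 y1 \<in> fmeasurable lborel" by (rule fmeasurable_cbox)
qed (auto simp: sect_def)

definition Jc :: "real \<Rightarrow> nat \<Rightarrow> real \<Rightarrow> nat \<Rightarrow> real set" where
  "Jc k n p c = {(real c ^ 2 - k - p) / real n ^ 2 <..< (real c ^ 2 - k + p) / real n ^ 2}"

lemma Jc_measure: "n \<ge> 1 \<Longrightarrow> p > 0 \<Longrightarrow> measure lborel (Jc k n p c) = 2 * p / real n ^ 2"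
  unfolding Jc_def by (simp add: field_simps)

lemma Jc_sets[measurable]: "Jc k n p c \<in> sets lborel"
  unfolding Jc_def by simp

lemma Jc_fmeas: "Jc k n p c \<in> fmeasurable lborel"
proof (rule fmeasurableI2[of "cbox ((real c ^ 2 - k - p) / real n ^ 2) ((real c ^ 2 - k + p) / real n ^ 2)"])
  show "cbox ((real c ^ 2 - k - p) / real n ^ 2) ((real c ^ 2 - k + p) / real n ^ 2) \<in> fmeasurable lborel"
    by (rule fmeasurable_cbox)
qed (auto simp: Jc_def)

lemma Jc_disj:
  assumes "n \<ge> 1" "p \<le> 1/2" "c < d"
  shows "Jc k n p c \<inter> Jc k n p d = {}"
proof -
  have "real c + 1 \<le> real d" using assms by simp
  hence "(real c + 1)^2 \<le> real d ^ 2" by (intro power_mono) auto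
  hence "real c ^ 2 + 2 * p \<le> real d ^ 2" using assms by (simp add: power2_eq_square algebra_simps)
  hence "(real c ^ 2 - k + p) / real n ^ 2 \<le> (real d ^ 2 - k - p) / real n ^ 2"
    using assms by (intro divide_right_mono) auto
  thus ?thesis unfolding Jc_def by auto
qed

lemma card_lower:
  fixes U V :: real
  assumes "0 \<le> U"
  shows "real (card {nat \<lceil>sqrt U\<rceil> .. nat \<lfloor>sqrt V\<rfloor>}) \<ge> sqrt V - sqrt U - 1"
proof -
  have "real (card {nat \<lceil>sqrt U\<rceil> .. nat \<lfloor>sqrt V\<rfloor>}) = real (Suc (nat \<lfloor>sqrt V\<rfloor>) - nat \<lceil>sqrt U\<rceil>)" by simp
  also have "\<dots> \<ge> real (nat \<lfloor>sqrt V\<rfloor>) + 1 - real (nat \<lceil>sqrt U\<rceil>)" by linarith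
  finally have 1: "real (card {nat \<lceil>sqrt U\<rceil> .. nat \<lfloor>sqrt V\<rfloor>}) \<ge> real (nat \<lfloor>sqrt V\<rfloor>) + 1 - real (nat \<lceil>sqrt U\<rceil>)" .
  have 2: "real (nat \<lfloor>sqrt V\<rfloor>) \<ge> sqrt V - 1" by linarith
  have "sqrt U \<ge> 0" using assms by simp
  hence 3: "real (nat \<lceil>sqrt U\<rceil>) \<le> sqrt U + 1" by linarith
  show ?thesis using 1 2 3 by linarith
qed

lemma card_upper:
  fixes U V :: real
  assumes "0 \<le> U" "U \<le> V"
  shows "real (card {nat \<lceil>sqrt U\<rceil> .. nat \<lfloor>sqrt V\<rfloor>}) \<le> sqrt V - sqrt U + 1"
proof -
  have su: "sqrt U \<le> sqrt V" "0 \<le> sqrt U" using assms by auto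
  have "real (card {nat \<lceil>sqrt U\<rceil> .. nat \<lfloor>sqrt V\<rfloor>}) = real (Suc (nat \<lfloor>sqrt V\<rfloor>) - nat \<lceil>sqrt U\<rceil>)" by simp
  also have "\<dots> \<le> sqrt V - sqrt U + 1"
  proof (cases "nat \<lceil>sqrt U\<rceil> \<le> Suc (nat \<lfloor>sqrt V\<rfloor>)")
    case True
    then have "real (Suc (nat \<lfloor>sqrt V\<rfloor>) - nat \<lceil>sqrt U\<rceil>) = real (nat \<lfloor>sqrt V\<rfloor>) + 1 - real (nat \<lceil>sqrt U\<rceil>)"
      by (simp add: of_nat_diff)
    also have "\<dots> \<le> sqrt V - sqrt U + 1" using su by linarith
    finally show ?thesis .
  next
    case False
    then have "Suc (nat \<lfloor>sqrt V\<rfloor>) - nat \<lceil>sqrt U\<rceil> = 0" using False by arith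
    then show ?thesis using su by simp
  qed
  finally show ?thesis .
qed

lemma sect_lower:
  fixes k p y0 y1 :: real and n :: nat
  assumes n1: "n \<ge> 1" and p0: "0 < p" and p1: "p \<le> 1/2" and k0: "k \<ge> 0" and y00: "y0 \<ge> 0"
    and top: "k + real n ^ 2 * y1 \<le> 2 * real n ^ 2" and big: "real n * (y1 - y0) \<ge> 24"
  shows "measure lborel (sect k n p y0 y1) \<ge> (y1 - y0) * p / (2 * real n)"
proof -
  define L where "L = y1 - y0"
  define U where "U = k + real n ^ 2 * y0 + p"
  define V where "V = k + real n ^ 2 * y1 - p"
  define C where "C = {nat \<lceil>sqrt U\<rceil> .. nat \<lfloor>sqrt V\<rfloor>}"
  have nr: "real n \<ge> 1" using n1 by simp
  have n2: "real n ^ 2 \<ge> 1" using nr by simp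
  have U0: "U \<ge> 0" unfolding U_def using k0 y00 p0 by simp
  have VU: "V - U = real n ^ 2 * L - 2 * p" unfolding V_def U_def L_def by (simp add: algebra_simps)
  have nLp: "real n ^ 2 * L = real n * (real n * L)" by (simp add: power2_eq_square)
  have "real n * (real n * L) \<ge> real n * 24" using big nr unfolding L_def by simp
  hence "real n ^ 2 * L \<ge> 24" using nr nLp by linarith
  hence VU0: "V - U > 0" using VU p1 by linarith
  have V2: "V \<le> 2 * real n ^ 2" unfolding V_def using top p0 by simp
  have "sqrt V \<le> sqrt (2 * real n ^ 2)" using V2 by simp
  also have "\<dots> = sqrt 2 * real n" by (simp add: real_sqrt_mult)
  also have "\<dots> \<le> 1.5 * real n"
  proof -
    have "sqrt 2 \<le> sqrt (1.5^2)" by (intro real_sqrt_le_mono) (simp add: power2_eq_square)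
    hence "sqrt 2 \<le> 1.5" by simp
    thus ?thesis using nr by (intro mult_right_mono) auto
  qed
  finally have sV: "sqrt V \<le> 1.5 * real n" .
  have sU: "sqrt U \<le> sqrt V" using VU0 by simp
  have sU0: "sqrt U \<ge> 0" using U0 by simp
  have prod: "(sqrt V - sqrt U) * (sqrt V + sqrt U) = V - U"
    using U0 VU0 by (simp add: algebra_simps power2_eq_square[symmetric])
  have "sqrt V > 0" using VU0 U0 by simp
  hence pos: "sqrt V + sqrt U > 0" using sU0 by linarith
  have "sqrt V - sqrt U = (V - U) / (sqrt V + sqrt U)" using prod pos by (simp add: field_simps)
  also have "\<dots> \<ge> (V - U) / (3 * real n)"
  proof (rule divide_left_mono)
    show "sqrt V + sqrt U \<le> 3 * real n" using sV sU by linarith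
    show "0 \<le> V - U" using VU0 by simp
    show "0 < 3 * real n * (sqrt V + sqrt U)" using pos nr by simp
  qed
  finally have d: "sqrt V - sqrt U \<ge> (real n ^ 2 * L - 2 * p) / (3 * real n)" using VU by simp
  have "(real n ^ 2 * L - 2 * p) / (3 * real n) = real n * L / 3 - 2 * p / (3 * real n)"
    using nr by (simp add: field_simps power2_eq_square)
  also have "2 * p / (3 * real n) \<le> 1" using p1 nr by (simp add: field_simps)
  hence "real n * L / 3 - 2 * p / (3 * real n) \<ge> real n * L / 3 - 1" by linarith
  finally have "sqrt V - sqrt U \<ge> real n * L / 3 - 1" using d by linarith
  hence cardC: "real (card C) \<ge> real n * L / 4"
    using card_lower[OF U0, of V] big unfolding C_def L_def by linarith
  have sub: "(\<Union>c\<in>C. Jc k n p c) \<subseteq> sect k n p y0 y1"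
  proof clarify
    fix c y assume cC: "c \<in> C" and y: "y \<in> Jc k n p c"
    have "real c \<ge> sqrt U" using cC unfolding C_def by (simp add: le_nat_iff)
    hence "real c ^ 2 \<ge> sqrt U ^ 2" using sU0 by (intro power_mono) auto
    hence c1: "real c ^ 2 \<ge> U" using U0 by simp
    have fl: "\<lfloor>sqrt V\<rfloor> \<ge> 0" using sU sU0 by simp
    have "int c \<le> \<lfloor>sqrt V\<rfloor>" using cC fl unfolding C_def by (simp add: le_nat_iff)
    hence "real c \<le> sqrt V" by (simp add: le_floor_iff)
    hence "real c ^ 2 \<le> sqrt V ^ 2" by (intro power_mono) auto
    hence c2: "real c ^ 2 \<le> V" using U0 VU0 by simp
    have nn: "real n ^ 2 > 0" using nr by simp
    have ya: "(real c ^ 2 - k - p) < real n ^ 2 * y" and yb: "real n ^ 2 * y < (real c ^ 2 - k + p)"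
      using y nn unfolding Jc_def by (auto simp: field_simps)
    have "real n ^ 2 * y0 \<le> real n ^ 2 * y" using ya c1 unfolding U_def by linarith
    hence "y0 \<le> y" using nn by simp
    moreover have "real n ^ 2 * y \<le> real n ^ 2 * y1" using yb c2 unfolding V_def by linarith
    hence "y \<le> y1" using nn by simp
    moreover have "\<bar>k + real n ^ 2 * y - real c ^ 2\<bar> < p" using ya yb by linarith
    ultimately show "y \<in> sect k n p y0 y1" unfolding sect_def by blast
  qed
  have disj: "disjoint_family_on (Jc k n p) C"
    unfolding disjoint_family_on_def
  proof clarify
    fix c d :: nat assume "c \<noteq> d"
    then show "Jc k n p c \<inter> Jc k n p d = {}"
      using Jc_disj[OF n1 p1, of c d k] Jc_disj[OF n1 p1, of d c k]
      by (cases "c < d") (auto simp: Int_commute)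
  qed
  have "measure lborel (\<Union>c\<in>C. Jc k n p c) = (\<Sum>c\<in>C. measure lborel (Jc k n p c))"
  proof (rule measure_finite_Union)
    show "finite C" unfolding C_def by simp
    show "Jc k n p ` C \<subseteq> sets lborel" using Jc_sets by auto
    show "disjoint_family_on (Jc k n p) C" by (rule disj)
    fix c
    have "emeasure lborel (Jc k n p c) \<le> emeasure lborel {(real c ^ 2 - k - p) / real n ^ 2 .. (real c ^ 2 - k + p) / real n ^ 2}"
      by (rule emeasure_mono) (auto simp: Jc_def)
    then show "emeasure lborel (Jc k n p c) \<noteq> \<infinity>"
      by (metis ennreal_neq_top neq_top_trans emeasure_lborel_Icc_eq infinity_ennreal_def)
  qed
  also have "\<dots> = real (card C) * (2 * p / real n ^ 2)" using Jc_measure[OF n1 p0] by simp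
  finally have mU: "measure lborel (\<Union>c\<in>C. Jc k n p c) = real (card C) * (2 * p / real n ^ 2)" .
  have "(y1 - y0) * p / (2 * real n) = (real n * L / 4) * (2 * p / real n ^ 2)"
    using nr unfolding L_def by (simp add: field_simps power2_eq_square)
  also have "\<dots> \<le> real (card C) * (2 * p / real n ^ 2)"
    using cardC p0 by (intro mult_right_mono) auto
  also have "\<dots> \<le> measure lborel (sect k n p y0 y1)"
    unfolding mU[symmetric] by (rule measure_mono_fmeasurable[OF sub _ sect_fmeas]) (use Jc_sets in \<open>auto simp: C_def\<close>)
  finally show ?thesis .
qed

lemma sect_upper:
  fixes k p y0 y1 e :: real and n :: nat
  assumes n1: "n \<ge> 1" and p0: "0 < p" and p1: "p \<le> 1/2" and e0: "0 < e" and e1: "e \<le> 1"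
    and low: "k + real n ^ 2 * y0 - p \<ge> (e * real n / 2) ^ 2" and big: "real n * (y1 - y0) \<ge> 5"
  shows "measure lborel (sect k n p y0 y1) \<le> 6 * (y1 - y0) * p / (e * real n)"
proof -
  define L where "L = y1 - y0"
  define U where "U = k + real n ^ 2 * y0 - p"
  define V where "V = k + real n ^ 2 * y1 + p"
  define C where "C = {nat \<lceil>sqrt U\<rceil> .. nat \<lfloor>sqrt V\<rfloor>}"
  have nr: "real n \<ge> 1" using n1 by simp
  have nn: "real n ^ 2 > 0" using nr by simp
  have L0: "L > 0"
  proof (rule ccontr)
    assume "\<not> L > 0" hence "real n * L \<le> 0" using nr by (simp add: mult_nonneg_nonpos)
    thus False using big unfolding L_def by simp
  qed
  have en0: "e * real n / 2 > 0" using e0 nr by simp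
  have U0: "U \<ge> (e * real n / 2) ^ 2" using low unfolding U_def .
  hence U0': "U \<ge> 0" by (smt (verit) zero_le_power2)
  have VU: "V - U = real n ^ 2 * L + 2 * p" unfolding V_def U_def L_def by (simp add: algebra_simps)
  have VU0: "V - U > 0" using VU L0 nn p0 by (simp add: add_pos_pos)
  have sU: "sqrt U \<ge> e * real n / 2"
  proof -
    have "sqrt U \<ge> sqrt ((e * real n / 2) ^ 2)" using U0 by (intro real_sqrt_le_mono)
    thus ?thesis using en0 by simp
  qed
  have sUV: "sqrt U \<le> sqrt V" using VU0 by simp
  have prod: "(sqrt V - sqrt U) * (sqrt V + sqrt U) = V - U"
    using U0' VU0 by (simp add: algebra_simps power2_eq_square[symmetric])
  have pos: "sqrt V + sqrt U > 0" using sU en0 sUV by linarith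
  have "sqrt V - sqrt U = (V - U) / (sqrt V + sqrt U)" using prod pos by (simp add: field_simps)
  also have "\<dots> \<le> (V - U) / (e * real n / 2)"
  proof (rule divide_left_mono)
    show "e * real n / 2 \<le> sqrt V + sqrt U" using sU sUV en0 by linarith
    show "0 \<le> V - U" using VU0 by simp
    show "0 < (sqrt V + sqrt U) * (e * real n / 2)" using pos en0 by simp
  qed
  also have "\<dots> = 2 * real n * L / e + 4 * p / (e * real n)"
    unfolding VU using e0 nr by (simp add: field_simps power2_eq_square)
  also have "\<dots> \<le> 2 * real n * L / e + 2 / e"
  proof -
    have "4 * p / (e * real n) \<le> 2 / e" using p1 p0 e0 nr by (simp add: field_simps)
    thus ?thesis by simp
  qed
  finally have d: "sqrt V - sqrt U \<le> 2 * real n * L / e + 2 / e" .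
  have "1 \<le> 1 / e" using e0 e1 by (simp add: field_simps)
  hence "real (card C) \<le> 2 * real n * L / e + 3 / e"
  proof -
    have "3 / e = 2 / e + 1 / e" by (simp add: field_simps)
    moreover have "real (card C) \<le> sqrt V - sqrt U + 1"
      using card_upper[OF U0' less_imp_le[OF VU0[unfolded diff_gt_0_iff_gt]]] unfolding C_def .
    ultimately show ?thesis using d \<open>1 \<le> 1 / e\<close> by linarith
  qed
  also have "\<dots> \<le> 3 * real n * L / e"
  proof -
    have nL: "real n * L \<ge> 5" using big unfolding L_def .
    have "2 * real n * L + 3 \<le> 3 * real n * L" using nL by linarith
    hence "(2 * real n * L + 3) / e \<le> 3 * real n * L / e" using e0 by (intro divide_right_mono) auto
    thus ?thesis by (simp add: add_divide_distrib)
  qed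
  finally have cardC: "real (card C) \<le> 3 * real n * L / e" .
  have sub: "sect k n p y0 y1 \<subseteq> (\<Union>c\<in>C. Jc k n p c)"
  proof
    fix y assume "y \<in> sect k n p y0 y1"
    then obtain c :: nat where y0y: "y0 \<le> y" and yy1: "y \<le> y1"
      and c: "\<bar>k + real n ^ 2 * y - real c ^ 2\<bar> < p" unfolding sect_def by blast
    have "real n ^ 2 * y0 \<le> real n ^ 2 * y" using y0y nn by simp
    hence "U < real c ^ 2" using c unfolding U_def by linarith
    hence "sqrt U < sqrt (real c ^ 2)" by (simp only: real_sqrt_less_iff)
    hence "sqrt U \<le> real c" by simp
    hence "\<lceil>sqrt U\<rceil> \<le> int c" by (simp add: ceiling_le_iff)
    hence cl: "nat \<lceil>sqrt U\<rceil> \<le> c" by linarith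
    have "real n ^ 2 * y \<le> real n ^ 2 * y1" using yy1 nn by simp
    hence "real c ^ 2 < V" using c unfolding V_def by linarith
    hence "sqrt (real c ^ 2) < sqrt V" by (simp only: real_sqrt_less_iff)
    hence "real c \<le> sqrt V" by simp
    hence "int c \<le> \<lfloor>sqrt V\<rfloor>" by (simp add: le_floor_iff)
    hence cu: "c \<le> nat \<lfloor>sqrt V\<rfloor>" by linarith
    have "y \<in> Jc k n p c" unfolding Jc_def using c nn by (auto simp: field_simps)
    thus "y \<in> (\<Union>c\<in>C. Jc k n p c)" using cl cu unfolding C_def by auto
  qed
  have "measure lborel (sect k n p y0 y1) \<le> measure lborel (\<Union>c\<in>C. Jc k n p c)"
  proof (rule measure_mono_fmeasurable[OF sub])
    show "sect k n p y0 y1 \<in> sets lborel" by (rule sect_sets)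
    show "(\<Union>c\<in>C. Jc k n p c) \<in> fmeasurable lborel"
      by (rule fmeasurable.finite_UN) (auto simp: C_def Jc_fmeas)
  qed
  also have "\<dots> \<le> (\<Sum>c\<in>C. measure lborel (Jc k n p c))"
    by (rule measure_UNION_le) (use Jc_sets in \<open>auto simp: C_def\<close>)
  also have "\<dots> = real (card C) * (2 * p / real n ^ 2)" using Jc_measure[OF n1 p0] by simp
  also have "\<dots> \<le> (3 * real n * L / e) * (2 * p / real n ^ 2)"
    using cardC p0 by (intro mult_right_mono) auto
  also have "\<dots> = 6 * (y1 - y0) * p / (e * real n)"
    unfolding L_def using e0 nr by (simp add: field_simps power2_eq_square)
  finally show ?thesis .
qed

lemma int_bounds:
  fixes A :: "(real \<times> real) set" and S :: "real \<Rightarrow> real set"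
  assumes eq: "emeasure lborel A = (\<integral>\<^sup>+x. emeasure lborel (S x) \<partial>lborel)"
    and out: "\<And>x. x \<notin> {x0..x1} \<Longrightarrow> S x = {}"
    and fin: "\<And>x. emeasure lborel (S x) \<noteq> \<infinity>"
    and bnd: "\<And>x. x \<in> {x0..x1} \<Longrightarrow> m \<le> measure lborel (S x) \<and> measure lborel (S x) \<le> M"
    and m0: "m \<ge> 0" and x01: "x0 \<le> x1"
  shows "(x1 - x0) * m \<le> measure lborel A \<and> measure lborel A \<le> (x1 - x0) * M"
proof -
  have M0: "M \<ge> 0" using bnd[of x0] x01 m0 by auto
  have up: "emeasure lborel (S x) \<le> ennreal M * indicator {x0..x1} x" for x
  proof (cases "x \<in> {x0..x1}")
    case True
    then show ?thesis using bnd[OF True] emeasure_eq_ennreal_measure[OF fin[of x, unfolded infinity_ennreal_def]]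
      by (auto simp: indicator_def intro!: ennreal_leI)
  next
    case False
    then show ?thesis using out[OF False] by simp
  qed
  have lo: "ennreal m * indicator {x0..x1} x \<le> emeasure lborel (S x)" for x
  proof (cases "x \<in> {x0..x1}")
    case True
    then show ?thesis using bnd[OF True] emeasure_eq_ennreal_measure[OF fin[of x, unfolded infinity_ennreal_def]]
      by (auto simp: indicator_def intro!: ennreal_leI)
  next
    case False
    then show ?thesis by simp
  qed
  have "emeasure lborel A \<le> (\<integral>\<^sup>+x. ennreal M * indicator {x0..x1} x \<partial>lborel)"
    unfolding eq by (intro nn_integral_mono up)
  also have "\<dots> = ennreal M * emeasure lborel {x0..x1}" by (rule nn_integral_cmult_indicator) simp
  also have "\<dots> = ennreal ((x1 - x0) * M)" using x01 M0 by (simp add: ennreal_mult mult.commute)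
  finally have U: "emeasure lborel A \<le> ennreal ((x1 - x0) * M)" .
  have "ennreal ((x1 - x0) * m) = ennreal m * emeasure lborel {x0..x1}" using x01 m0 by (simp add: ennreal_mult mult.commute)
  also have "\<dots> = (\<integral>\<^sup>+x. ennreal m * indicator {x0..x1} x \<partial>lborel)" by (rule nn_integral_cmult_indicator[symmetric]) simp
  also have "\<dots> \<le> emeasure lborel A"
    unfolding eq by (intro nn_integral_mono lo)
  finally have L: "ennreal ((x1 - x0) * m) \<le> emeasure lborel A" .
  have finA: "emeasure lborel A \<noteq> top" using U by (metis ennreal_neq_top neq_top_trans)
  have E: "emeasure lborel A = ennreal (measure lborel A)" by (rule emeasure_eq_ennreal_measure[OF finA])
  show ?thesis using U L x01 M0 m0 unfolding E by (simp add: ennreal_le_iff)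
qed

lemma sect_le: "y0 \<le> y1 \<Longrightarrow> measure lborel (sect k n p y0 y1) \<le> y1 - y0"
proof -
  assume "y0 \<le> y1"
  have "measure lborel (sect k n p y0 y1) \<le> measure lborel (cbox y0 y1)"
    by (rule measure_mono_fmeasurable[OF _ _ fmeasurable_cbox]) (auto simp: sect_def)
  thus ?thesis using \<open>y0 \<le> y1\<close> by simp
qed

lemma sect_fin: "emeasure lborel (sect k n p y0 y1) \<noteq> top"
  using sect_fmeas[of k n p y0 y1] by (auto simp: fmeasurable_def)

lemma core_lower:
  fixes A :: "(real \<times> real) set" and S :: "real \<Rightarrow> real set" and k :: "real \<Rightarrow> real"
  assumes eq: "emeasure lborel A = (\<integral>\<^sup>+x. emeasure lborel (S x) \<partial>lborel)"
    and secs: "\<And>x. x \<in> {x0..x1} \<Longrightarrow> S x = sect (k x) n p y0 y1"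
    and outs: "\<And>x. x \<notin> {x0..x1} \<Longrightarrow> S x = {}"
    and n1: "n \<ge> 1" and p0: "0 < p" and p1: "p \<le> 1/2" and y00: "y0 \<ge> 0" and x01: "x0 \<le> x1"
    and kk: "\<And>x. x \<in> {x0..x1} \<Longrightarrow> k x \<ge> 0 \<and> k x + real n ^ 2 * y1 \<le> 2 * real n ^ 2"
    and big: "real n * (y1 - y0) \<ge> 24"
  shows "(x1 - x0) * ((y1 - y0) * p / (2 * real n)) \<le> measure lborel A"
proof -
  have y01: "y0 \<le> y1"
  proof (rule ccontr)
    assume "\<not> y0 \<le> y1" hence "real n * (y1 - y0) \<le> 0" by (simp add: mult_nonneg_nonpos)
    thus False using big by simp
  qed
  have "(x1 - x0) * ((y1 - y0) * p / (2 * real n)) \<le> measure lborel A \<and> measure lborel A \<le> (x1 - x0) * (y1 - y0)"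
  proof (rule int_bounds[OF eq])
    show "S x = {}" if "x \<notin> {x0..x1}" for x using outs that .
    show "emeasure lborel (S x) \<noteq> \<infinity>" for x
      by (cases "x \<in> {x0..x1}") (simp_all add: secs outs sect_fin)
    show "(y1 - y0) * p / (2 * real n) \<le> measure lborel (S x) \<and> measure lborel (S x) \<le> y1 - y0"
      if "x \<in> {x0..x1}" for x
      using sect_lower[OF n1 p0 p1 _ y00 _ big, of "k x"] kk[OF that] sect_le[OF y01] secs[OF that] by auto
    show "0 \<le> (y1 - y0) * p / (2 * real n)" using y01 p0 by simp
  qed (rule x01)
  thus ?thesis by simp
qed

lemma core_upper:
  fixes A :: "(real \<times> real) set" and S :: "real \<Rightarrow> real set" and k :: "real \<Rightarrow> real"
  assumes eq: "emeasure lborel A = (\<integral>\<^sup>+x. emeasure lborel (S x) \<partial>lborel)"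
    and secs: "\<And>x. x \<in> {x0..x1} \<Longrightarrow> S x = sect (k x) n p y0 y1"
    and outs: "\<And>x. x \<notin> {x0..x1} \<Longrightarrow> S x = {}"
    and n1: "n \<ge> 1" and p0: "0 < p" and p1: "p \<le> 1/2" and e0: "0 < e" and e1: "e \<le> 1" and x01: "x0 \<le> x1"
    and kk: "\<And>x. x \<in> {x0..x1} \<Longrightarrow> k x + real n ^ 2 * y0 - p \<ge> (e * real n / 2) ^ 2"
    and big: "real n * (y1 - y0) \<ge> 5"
  shows "measure lborel A \<le> (x1 - x0) * (6 * (y1 - y0) * p / (e * real n))"
proof -
  have "(x1 - x0) * 0 \<le> measure lborel A \<and> measure lborel A \<le> (x1 - x0) * (6 * (y1 - y0) * p / (e * real n))"
  proof (rule int_bounds[OF eq])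
    show "S x = {}" if "x \<notin> {x0..x1}" for x using outs that .
    show "emeasure lborel (S x) \<noteq> \<infinity>" for x
      by (cases "x \<in> {x0..x1}") (simp_all add: secs outs sect_fin)
    show "0 \<le> measure lborel (S x) \<and> measure lborel (S x) \<le> 6 * (y1 - y0) * p / (e * real n)"
      if "x \<in> {x0..x1}" for x
      using sect_upper[OF n1 p0 p1 e0 e1 kk[OF that] big] secs[OF that] by auto
  qed (auto simp: x01)
  thus ?thesis by simp
qed

lemma sigma_c_sets: "sigma_c \<psi> a b c \<in> sets (lborel :: (real \<times> real) measure)"
proof -
  have "sigma_c \<psi> a b c = ({0..1} \<times> {0..1}) \<inter>
      {z :: real \<times> real. \<bar>real a ^ 2 * fst z + real b ^ 2 * snd z - real c ^ 2\<bar> < \<psi> (real (hab a b))}"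
    unfolding sigma_c_def by auto
  also have "\<dots> \<in> sets lborel"
  proof (rule sets.Int)
    have "closed ({0..1::real} \<times> {0..1::real})" by (intro closed_Times) auto
    thus "{0..1::real} \<times> {0..1::real} \<in> sets lborel" by simp
    have "open {z :: real \<times> real. \<bar>real a ^ 2 * fst z + real b ^ 2 * snd z - real c ^ 2\<bar> < \<psi> (real (hab a b))}"
      by (intro open_Collect_less continuous_intros continuous_on_const)
    thus "{z :: real \<times> real. \<bar>real a ^ 2 * fst z + real b ^ 2 * snd z - real c ^ 2\<bar> < \<psi> (real (hab a b))} \<in> sets lborel"
      by simp
  qed
  finally show ?thesis .
qed

lemma sigma_sets: "sigma \<psi> a b \<in> sets (lborel :: (real \<times> real) measure)"
  unfolding sigma_def by (rule sets.countable_UN') (use sigma_c_sets in auto)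

lemma sigA_sets: "sigma \<psi> a b \<inter> ({x0..x1} \<times> {y0..y1}) \<in> sets (lborel :: (real \<times> real) measure)"
proof (rule sets.Int[OF sigma_sets])
  have "closed ({x0..x1::real} \<times> {y0..y1::real})" by (intro closed_Times) auto
  thus "{x0..x1::real} \<times> {y0..y1::real} \<in> sets lborel" by simp
qed

lemma sigA_pp: "sigma \<psi> a b \<inter> ({x0..x1} \<times> {y0..y1}) \<in> sets (lborel \<Otimes>\<^sub>M lborel)"
  unfolding lborel_prod by (rule sigA_sets)

lemma eq1: "emeasure lborel (sigma \<psi> a b \<inter> ({x0..x1} \<times> {y0..y1})) =
   (\<integral>\<^sup>+x. emeasure lborel (Pair x -` (sigma \<psi> a b \<inter> ({x0..x1} \<times> {y0..y1}))) \<partial>lborel)"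
proof -
  have "emeasure (lborel :: (real \<times> real) measure) (sigma \<psi> a b \<inter> ({x0..x1} \<times> {y0..y1})) =
     emeasure (lborel \<Otimes>\<^sub>M lborel) (sigma \<psi> a b \<inter> ({x0..x1} \<times> {y0..y1}))" by (simp add: lborel_prod)
  also have "\<dots> = (\<integral>\<^sup>+x. emeasure lborel (Pair x -` (sigma \<psi> a b \<inter> ({x0..x1} \<times> {y0..y1}))) \<partial>lborel)"
    by (rule lborel.emeasure_pair_measure_alt[OF sigA_pp])
  finally show ?thesis .
qed

lemma eq2: "emeasure lborel (sigma \<psi> a b \<inter> ({x0..x1} \<times> {y0..y1})) =
   (\<integral>\<^sup>+y. emeasure lborel ((\<lambda>x. (x, y)) -` (sigma \<psi> a b \<inter> ({x0..x1} \<times> {y0..y1}))) \<partial>lborel)"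
proof -
  have "emeasure (lborel :: (real \<times> real) measure) (sigma \<psi> a b \<inter> ({x0..x1} \<times> {y0..y1})) =
     emeasure (lborel \<Otimes>\<^sub>M lborel) (sigma \<psi> a b \<inter> ({x0..x1} \<times> {y0..y1}))" by (simp add: lborel_prod)
  also have "\<dots> = (\<integral>\<^sup>+y. emeasure lborel ((\<lambda>x. (x, y)) -` (sigma \<psi> a b \<inter> ({x0..x1} \<times> {y0..y1}))) \<partial>lborel)"
    by (rule lborel_pair.emeasure_pair_measure_alt2[OF sigA_pp])
  finally show ?thesis .
qed

lemma sec1: "x \<in> {x0..x1} \<Longrightarrow> 0 \<le> x0 \<Longrightarrow> x1 \<le> 1 \<Longrightarrow> 0 \<le> y0 \<Longrightarrow> y1 \<le> 1 \<Longrightarrow>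
  Pair x -` (sigma \<psi> a b \<inter> ({x0..x1} \<times> {y0..y1})) = sect (real a ^ 2 * x) b (\<psi> (real (hab a b))) y0 y1"
  unfolding sigma_def sigma_c_def sect_def by auto

lemma sec1o: "x \<notin> {x0..x1} \<Longrightarrow> Pair x -` (sigma \<psi> a b \<inter> ({x0..x1} \<times> {y0..y1})) = {}"
  by auto

lemma sec2: "y \<in> {y0..y1} \<Longrightarrow> 0 \<le> x0 \<Longrightarrow> x1 \<le> 1 \<Longrightarrow> 0 \<le> y0 \<Longrightarrow> y1 \<le> 1 \<Longrightarrow>
  (\<lambda>x. (x, y)) -` (sigma \<psi> a b \<inter> ({x0..x1} \<times> {y0..y1})) = sect (real b ^ 2 * y) a (\<psi> (real (hab a b))) x0 x1"
  unfolding sigma_def sigma_c_def sect_def by (auto simp: add.commute)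

lemma sec2o: "y \<notin> {y0..y1} \<Longrightarrow> (\<lambda>x. (x, y)) -` (sigma \<psi> a b \<inter> ({x0..x1} \<times> {y0..y1})) = {}"
  by auto

lemma kk_arith:
  fixes e n y0 K p :: real
  assumes e0: "0 < e" and e1: "e \<le> 1" and ey: "e \<le> y0" and en: "e * n \<ge> 1" and n1: "n \<ge> 1"
    and K0: "K \<ge> 0" and p1: "p \<le> 1/2"
  shows "K + n ^ 2 * y0 - p \<ge> (e * n / 2) ^ 2"
proof -
  have a: "n ^ 2 * y0 \<ge> n ^ 2 * e" using ey by (intro mult_left_mono) auto
  have b: "e * n ^ 2 \<ge> 1" using en n1 by (simp add: power2_eq_square) (metis mult.assoc mult_mono' mult.right_neutral zero_le_one order_trans mult_le_cancel_left1 less_le_not_le)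
  have c: "(e * n / 2) ^ 2 = e * (e * n ^ 2) / 4" by (simp add: power2_eq_square)
  have "e * (e * n ^ 2) \<le> 1 * (e * n ^ 2)" using e1 b by (intro mult_right_mono) auto
  then show ?thesis using a b c K0 p1 by (simp add: mult.commute)
qed

lemma box_lower:
  fixes x0 x1 y0 y1 L :: real and a b :: nat
  assumes x00: "0 \<le> x0" and x11: "x1 \<le> 1" and y00: "0 \<le> y0" and y11: "y1 \<le> 1"
    and Lx: "x1 - x0 = L" and Ly: "y1 - y0 = L"
    and h1: "hab a b \<ge> 1" and p0: "0 < \<psi> (real (hab a b))" and p1: "\<psi> (real (hab a b)) \<le> 1/2"
    and big: "real (hab a b) * L \<ge> 24"
  shows "L * (L * \<psi> (real (hab a b)) / (2 * real (hab a b))) \<le> measure lborel (sigma \<psi> a b \<inter> ({x0..x1} \<times> {y0..y1}))"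
proof -
  have L0: "L \<ge> 0"
  proof (rule ccontr)
    assume "\<not> L \<ge> 0" hence "real (hab a b) * L \<le> 0" by (simp add: mult_nonneg_nonpos)
    thus False using big by simp
  qed
  show ?thesis
  proof (cases "a \<le> b")
    case True
    hence hb: "hab a b = b" unfolding hab_def by simp
    have "(x1 - x0) * ((y1 - y0) * \<psi> (real (hab a b)) / (2 * real b)) \<le> measure lborel (sigma \<psi> a b \<inter> ({x0..x1} \<times> {y0..y1}))"
    proof (rule core_lower[OF eq1, where k = "\<lambda>x. real a ^ 2 * x"])
      show "Pair x -` (sigma \<psi> a b \<inter> {x0..x1} \<times> {y0..y1}) = sect (real a ^ 2 * x) b (\<psi> (real (hab a b))) y0 y1"
        if "x \<in> {x0..x1}" for x using sec1[OF that x00 x11 y00 y11] .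
      show "Pair x -` (sigma \<psi> a b \<inter> {x0..x1} \<times> {y0..y1}) = {}" if "x \<notin> {x0..x1}" for x
        using sec1o[OF that] .
      show "1 \<le> b" using h1 hb by simp
      show "0 \<le> real a ^ 2 * x \<and> real a ^ 2 * x + real b ^ 2 * y1 \<le> 2 * real b ^ 2" if "x \<in> {x0..x1}" for x
      proof -
        have x1': "x \<le> 1" "0 \<le> x" using that x11 x00 by auto
        have q1: "real a ^ 2 \<le> real b ^ 2" using True by (simp add: power_mono)
        have q2: "real a ^ 2 * x \<le> real a ^ 2" using x1' by (simp add: mult_left_le)
        have q3: "real b ^ 2 * y1 \<le> real b ^ 2" using y11 by (simp add: mult_left_le)
        have q4: "0 \<le> real a ^ 2 * x" using x1' by simp
        show ?thesis using q1 q2 q3 q4 by linarith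
      qed
      show "24 \<le> real b * (y1 - y0)" using big hb Ly by simp
    qed (use p0 p1 y00 Lx L0 in auto)
    thus ?thesis using Lx Ly hb by simp
  next
    case False
    hence hb: "hab a b = a" unfolding hab_def by simp
    have "(y1 - y0) * ((x1 - x0) * \<psi> (real (hab a b)) / (2 * real a)) \<le> measure lborel (sigma \<psi> a b \<inter> ({x0..x1} \<times> {y0..y1}))"
    proof (rule core_lower[OF eq2, where k = "\<lambda>y. real b ^ 2 * y"])
      show "(\<lambda>x. (x, y)) -` (sigma \<psi> a b \<inter> {x0..x1} \<times> {y0..y1}) = sect (real b ^ 2 * y) a (\<psi> (real (hab a b))) x0 x1"
        if "y \<in> {y0..y1}" for y using sec2[OF that x00 x11 y00 y11] .
      show "(\<lambda>x. (x, y)) -` (sigma \<psi> a b \<inter> {x0..x1} \<times> {y0..y1}) = {}" if "y \<notin> {y0..y1}" for y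
        using sec2o[OF that] .
      show "1 \<le> a" using h1 hb by simp
      show "0 \<le> real b ^ 2 * y \<and> real b ^ 2 * y + real a ^ 2 * x1 \<le> 2 * real a ^ 2" if "y \<in> {y0..y1}" for y
      proof -
        have y1': "y \<le> 1" "0 \<le> y" using that y11 y00 by auto
        have q1: "real b ^ 2 \<le> real a ^ 2" using False by (simp add: power_mono)
        have q2: "real b ^ 2 * y \<le> real b ^ 2" using y1' by (simp add: mult_left_le)
        have q3: "real a ^ 2 * x1 \<le> real a ^ 2" using x11 by (simp add: mult_left_le)
        have q4: "0 \<le> real b ^ 2 * y" using y1' by simp
        show ?thesis using q1 q2 q3 q4 by linarith
      qed
      show "24 \<le> real a * (x1 - x0)" using big hb Lx by simp
    qed (use p0 p1 x00 Ly L0 in auto)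
    thus ?thesis using Lx Ly hb by simp
  qed
qed

lemma box_upper:
  fixes x0 x1 y0 y1 L e :: real and a b :: nat
  assumes e0: "0 < e" and e1: "e \<le> 1" and x00: "e \<le> x0" and x11: "x1 \<le> 1" and y00: "e \<le> y0" and y11: "y1 \<le> 1"
    and Lx: "x1 - x0 = L" and Ly: "y1 - y0 = L"
    and h1: "hab a b \<ge> 1" and p0: "0 < \<psi> (real (hab a b))" and p1: "\<psi> (real (hab a b)) \<le> 1/2"
    and eh: "e * real (hab a b) \<ge> 1"
    and big: "real (hab a b) * L \<ge> 5"
  shows "measure lborel (sigma \<psi> a b \<inter> ({x0..x1} \<times> {y0..y1})) \<le> L * (6 * L * \<psi> (real (hab a b)) / (e * real (hab a b)))"
proof -
  have L0: "L \<ge> 0"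
  proof (rule ccontr)
    assume "\<not> L \<ge> 0" hence "real (hab a b) * L \<le> 0" by (simp add: mult_nonneg_nonpos)
    thus False using big by simp
  qed
  have x00': "0 \<le> x0" "0 \<le> y0" using x00 y00 e0 by auto
  show ?thesis
  proof (cases "a \<le> b")
    case True
    hence hb: "hab a b = b" unfolding hab_def by simp
    have "measure lborel (sigma \<psi> a b \<inter> ({x0..x1} \<times> {y0..y1})) \<le> (x1 - x0) * (6 * (y1 - y0) * \<psi> (real (hab a b)) / (e * real b))"
    proof (rule core_upper[OF eq1, where k = "\<lambda>x. real a ^ 2 * x"])
      show "Pair x -` (sigma \<psi> a b \<inter> {x0..x1} \<times> {y0..y1}) = sect (real a ^ 2 * x) b (\<psi> (real (hab a b))) y0 y1"
        if "x \<in> {x0..x1}" for x using sec1[OF that x00'(1) x11 x00'(2) y11] .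
      show "Pair x -` (sigma \<psi> a b \<inter> {x0..x1} \<times> {y0..y1}) = {}" if "x \<notin> {x0..x1}" for x
        using sec1o[OF that] .
      show b1: "1 \<le> b" using h1 hb by simp
      show "(e * real b / 2) ^ 2 \<le> real a ^ 2 * x + real b ^ 2 * y0 - \<psi> (real (hab a b))" if "x \<in> {x0..x1}" for x
        using kk_arith[OF e0 e1 y00, of "real b" "real a ^ 2 * x" "\<psi> (real (hab a b))"] eh hb b1 that x00'(1) p1
        by simp
      show "5 \<le> real b * (y1 - y0)" using big hb Ly by simp
    qed (use p0 p1 e0 e1 Lx L0 in auto)
    thus ?thesis using Lx Ly hb by (simp add: mult.assoc)
  next
    case False
    hence hb: "hab a b = a" unfolding hab_def by simp
    have "measure lborel (sigma \<psi> a b \<inter> ({x0..x1} \<times> {y0..y1})) \<le> (y1 - y0) * (6 * (x1 - x0) * \<psi> (real (hab a b)) / (e * real a))"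
    proof (rule core_upper[OF eq2, where k = "\<lambda>y. real b ^ 2 * y"])
      show "(\<lambda>x. (x, y)) -` (sigma \<psi> a b \<inter> {x0..x1} \<times> {y0..y1}) = sect (real b ^ 2 * y) a (\<psi> (real (hab a b))) x0 x1"
        if "y \<in> {y0..y1}" for y using sec2[OF that x00'(1) x11 x00'(2) y11] .
      show "(\<lambda>x. (x, y)) -` (sigma \<psi> a b \<inter> {x0..x1} \<times> {y0..y1}) = {}" if "y \<notin> {y0..y1}" for y
        using sec2o[OF that] .
      show a1: "1 \<le> a" using h1 hb by simp
      show "(e * real a / 2) ^ 2 \<le> real b ^ 2 * y + real a ^ 2 * x0 - \<psi> (real (hab a b))" if "y \<in> {y0..y1}" for y
        using kk_arith[OF e0 e1 x00, of "real a" "real b ^ 2 * y" "\<psi> (real (hab a b))"] eh hb a1 that x00'(2) p1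
        by simp
      show "5 \<le> real a * (x1 - x0)" using big hb Lx by simp
    qed (use p0 p1 e0 e1 Ly L0 in auto)
    thus ?thesis using Lx Ly hb by (simp add: mult.assoc)
  qed
qed

lemma box_measure:
  fixes a b c d :: real
  assumes "a \<le> b" "c \<le> d"
  shows "measure lborel ({a..b} \<times> {c..d}) = (b - a) * (d - c)"
proof -
  have "emeasure (lborel :: (real \<times> real) measure) ({a..b} \<times> {c..d}) = emeasure (lborel \<Otimes>\<^sub>M lborel) ({a..b} \<times> {c..d})"
    by (simp add: lborel_prod)
  also have "\<dots> = emeasure lborel {a..b} * emeasure lborel {c..d}"
    by (rule lborel.emeasure_pair_measure_Times) auto
  also have "\<dots> = ennreal ((b - a) * (d - c))" using assms by (simp add: ennreal_mult)
  finally show ?thesis using assms by (simp add: measure_def)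
qed

lemma box_fmeas: "({a..b} \<times> {c..d} :: (real \<times> real) set) \<in> fmeasurable lborel"
proof -
  have "cbox (a, c) (b, d) \<in> fmeasurable lborel" by (rule fmeasurable_cbox)
  thus ?thesis by (simp add: cbox_Pair_eq)
qed

lemma ball_bounds:
  fixes z :: "real \<times> real" and r :: real
  assumes r0: "0 < r"
  shows "ball z r \<subseteq> {fst z - r .. fst z + r} \<times> {snd z - r .. snd z + r}"
    and "{fst z - r/2 .. fst z + r/2} \<times> {snd z - r/2 .. snd z + r/2} \<subseteq> ball z r"
proof -
  show "ball z r \<subseteq> {fst z - r .. fst z + r} \<times> {snd z - r .. snd z + r}"
  proof clarify
    fix x y assume "(x, y) \<in> ball z r"
    hence d: "dist z (x, y) < r" by simp
    have "\<bar>fst z - x\<bar> \<le> dist z (x, y)" "\<bar>snd z - y\<bar> \<le> dist z (x, y)"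
      using dist_fst_le[of z "(x,y)"] dist_snd_le[of z "(x,y)"] by (simp_all add: dist_real_def)
    thus "x \<in> {fst z - r .. fst z + r} \<and> y \<in> {snd z - r .. snd z + r}" using d by auto
  qed
  show "{fst z - r/2 .. fst z + r/2} \<times> {snd z - r/2 .. snd z + r/2} \<subseteq> ball z r"
  proof clarify
    fix x y assume x: "x \<in> {fst z - r/2 .. fst z + r/2}" and y: "y \<in> {snd z - r/2 .. snd z + r/2}"
    have ax: "\<bar>fst z - x\<bar> \<le> r/2" using x by (simp only: atLeastAtMost_iff abs_le_iff) linarith
    have ay: "\<bar>snd z - y\<bar> \<le> r/2" using y by (simp only: atLeastAtMost_iff abs_le_iff) linarith
    have "(fst z - x)^2 \<le> (r/2)^2" using ax by (metis abs_ge_zero power2_abs power_mono)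
    moreover have "(snd z - y)^2 \<le> (r/2)^2" using ay by (metis abs_ge_zero power2_abs power_mono)
    moreover have "r^2 > 0" using r0 by simp
    moreover have "(r/2)^2 = r^2/4" by (simp add: power_divide)
    ultimately have "(fst z - x)^2 + (snd z - y)^2 < r^2" by linarith
    hence "sqrt ((fst z - x)^2 + (snd z - y)^2) < sqrt (r^2)" by (simp only: real_sqrt_less_iff)
    hence "dist z (x, y) < r" using r0 by (cases z) (simp add: dist_Pair_Pair dist_real_def)
    thus "(x, y) \<in> ball z r" by simp
  qed
qed

lemma edge1:
  fixes c r e :: real
  assumes r0: "r > 0" and H: "\<And>t. \<bar>t - c\<bar> < r \<Longrightarrow> e \<le> t \<and> t \<le> 1"
  shows "e \<le> c - r \<and> c + r \<le> 1"
proof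
  show "e \<le> c - r"
  proof (rule ccontr)
    assume A: "\<not> e \<le> c - r"
    define d where "d = min r (e - (c - r)) / 2"
    have d0: "d > 0" "d \<le> r / 2" "d < e - (c - r)" using A r0 unfolding d_def by auto
    have "\<bar>(c - r + d) - c\<bar> < r" using d0 by auto
    from H[OF this] have "e \<le> c - r + d" by simp
    thus False using d0 by simp
  qed
  show "c + r \<le> 1"
  proof (rule ccontr)
    assume A: "\<not> c + r \<le> 1"
    define d where "d = min r (c + r - 1) / 2"
    have d0: "d > 0" "d \<le> r / 2" "d < c + r - 1" using A r0 unfolding d_def by auto
    have "\<bar>(c + r - d) - c\<bar> < r" using d0 by auto
    from H[OF this] have "c + r - d \<le> 1" by simp
    thus False using d0 by simp
  qed
qed

lemma ball_edges:
  fixes z :: "real \<times> real"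
  assumes r0: "r > 0" and B: "ball z r \<subseteq> {e..1} \<times> {e..1}"
  shows "e \<le> fst z - r" "fst z + r \<le> 1" "e \<le> snd z - r" "snd z + r \<le> 1"
proof -
  have "e \<le> fst z - r \<and> fst z + r \<le> 1"
  proof (rule edge1[OF r0])
    fix t assume "\<bar>t - fst z\<bar> < r"
    hence "(t, snd z) \<in> ball z r" by (cases z) (simp add: dist_Pair_Pair dist_real_def abs_minus_commute)
    thus "e \<le> t \<and> t \<le> 1" using B by auto
  qed
  moreover have "e \<le> snd z - r \<and> snd z + r \<le> 1"
  proof (rule edge1[OF r0])
    fix t assume "\<bar>t - snd z\<bar> < r"
    hence "(fst z, t) \<in> ball z r" by (cases z) (simp add: dist_Pair_Pair dist_real_def abs_minus_commute)
    thus "e \<le> t \<and> t \<le> 1" using B by auto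
  qed
  ultimately show "e \<le> fst z - r" "fst z + r \<le> 1" "e \<le> snd z - r" "snd z + r \<le> 1" by auto
qed

lemma c_bounds:
  fixes e :: real and a b c :: nat
  assumes e0: "0 < e" and e1: "e \<le> 1" and B: "ball z r \<subseteq> {e..1} \<times> {e..1}"
    and w: "w \<in> sigma_c \<psi> a b c \<inter> ball z r"
    and h1: "hab a b \<ge> 1" and eh: "e * real (hab a b) \<ge> 1" and p1: "\<psi> (real (hab a b)) \<le> 1/2"
  shows "e / 2 * real (hab a b) < real c \<and> real c < 2 * real (hab a b)"
proof -
  define h where "h = real (hab a b)"
  obtain x y where wxy: "w = (x, y)" by (cases w)
  have xy: "e \<le> x" "x \<le> 1" "e \<le> y" "y \<le> 1" using w B wxy by auto
  have ineq: "\<bar>real a ^ 2 * x + real b ^ 2 * y - real c ^ 2\<bar> < \<psi> h"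
    using w wxy unfolding sigma_c_def h_def by auto
  have hsq: "h ^ 2 \<le> real a ^ 2 + real b ^ 2" "real a ^ 2 \<le> h ^ 2" "real b ^ 2 \<le> h ^ 2"
    unfolding h_def hab_def by (auto simp: max_def power_mono)
  have "real a ^ 2 * x \<ge> real a ^ 2 * e" using xy by (intro mult_left_mono) auto
  moreover have "real b ^ 2 * y \<ge> real b ^ 2 * e" using xy by (intro mult_left_mono) auto
  moreover have "(real a ^ 2 + real b ^ 2) * e \<ge> h ^ 2 * e" using hsq e0 by (intro mult_right_mono) auto
  ultimately have S1: "real a ^ 2 * x + real b ^ 2 * y \<ge> e * h ^ 2" by (simp add: algebra_simps)
  have "real a ^ 2 * x \<le> real a ^ 2" "real b ^ 2 * y \<le> real b ^ 2" using xy by (simp_all add: mult_left_le)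
  hence S2: "real a ^ 2 * x + real b ^ 2 * y \<le> 2 * h ^ 2" using hsq by linarith
  have hh: "h \<ge> 1" using h1 unfolding h_def by simp
  have ehh: "e * h ^ 2 \<ge> 1"
  proof -
    have "e * h ^ 2 = (e * h) * h" by (simp add: power2_eq_square)
    also have "\<dots> \<ge> 1 * 1" using eh hh unfolding h_def by (intro mult_mono) auto
    finally show ?thesis by simp
  qed
  have p1': "\<psi> h \<le> 1/2" using p1 unfolding h_def .
  have c1: "real c ^ 2 > e * h ^ 2 / 2" using S1 ineq p1' ehh by linarith
  have "e * (e * h ^ 2) \<le> 1 * (e * h ^ 2)" using e1 ehh by (intro mult_right_mono) auto
  moreover have "(e / 2 * h) ^ 2 = e * (e * h ^ 2) / 4" by (simp add: power2_eq_square)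
  ultimately have "(e / 2 * h) ^ 2 < real c ^ 2" using c1 ehh by linarith
  hence A: "e / 2 * h < real c" by (rule power_less_imp_less_base) simp
  have "h ^ 2 \<ge> 1" using hh by simp
  hence "real c ^ 2 < (2 * h) ^ 2" using S2 ineq p1' by (simp add: power_mult_distrib)
  hence B: "real c < 2 * h" by (rule power_less_imp_less_base) (use hh in simp)
  show ?thesis using A B unfolding h_def by simp
qed

lemma main_fixed:
  fixes e r :: real and z :: "real \<times> real" and a b :: nat
  assumes e0: "0 < e" and e1: "e < 1" and r0: "0 < r" and B: "ball z r \<subseteq> {e..1} \<times> {e..1}"
    and h1: "real (hab a b) \<ge> 1" and eh: "e * real (hab a b) \<ge> 1" and hr: "real (hab a b) * r \<ge> 24"
    and p0: "0 < \<psi> (real (hab a b))" and p1: "\<psi> (real (hab a b)) \<le> 1/2"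
  shows "1/8 * measure lborel (ball z r) * (\<psi> (real (hab a b)) / real (hab a b))
              \<le> measure lborel (sigma \<psi> a b \<inter> ball z r)
            \<and> measure lborel (sigma \<psi> a b \<inter> ball z r)
              \<le> 24 / e * measure lborel (ball z r) * (\<psi> (real (hab a b)) / real (hab a b))
            \<and> (\<forall>c :: nat. sigma_c \<psi> a b c \<inter> ball z r \<noteq> {} \<longrightarrow>
                 e / 2 * real (hab a b) < real c \<and> real c < 2 * real (hab a b))"
proof (intro conjI allI impI)
  define h where "h = real (hab a b)"
  define p where "p = \<psi> (real (hab a b))"
  have hpos: "h > 0" using h1 unfolding h_def by simp
  have h1': "hab a b \<ge> 1" using h1 by simp
  obtain z1 z2 where z: "z = (z1, z2)" by (cases z)
  have E: "e \<le> z1 - r" "z1 + r \<le> 1" "e \<le> z2 - r" "z2 + r \<le> 1" using ball_edges[OF r0 B] z by auto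
  define Qs where "Qs = {z1 - r/2 .. z1 + r/2} \<times> {z2 - r/2 .. z2 + r/2}"
  define Qb where "Qb = {z1 - r .. z1 + r} \<times> {z2 - r .. z2 + r}"
  have QsB: "Qs \<subseteq> ball z r" using ball_bounds(2)[OF r0, of z] z unfolding Qs_def by simp
  have BQb: "ball z r \<subseteq> Qb" using ball_bounds(1)[OF r0, of z] z unfolding Qb_def by simp
  have mQs: "measure lborel Qs = r * r" unfolding Qs_def using r0 by (subst box_measure) auto
  have mQb: "measure lborel Qb = (2 * r) * (2 * r)" unfolding Qb_def using r0 by (subst box_measure) auto
  have Qb_f: "Qb \<in> fmeasurable lborel" unfolding Qb_def by (rule box_fmeas)
  have ball_f: "ball z r \<in> fmeasurable lborel" by (rule fmeasurableI2[OF Qb_f BQb]) simp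
  have X_sets: "sigma \<psi> a b \<inter> ball z r \<in> sets lborel" using sigma_sets by (intro sets.Int) auto
  have X_f: "sigma \<psi> a b \<inter> ball z r \<in> fmeasurable lborel"
    by (rule fmeasurableI2[OF Qb_f _ X_sets]) (use BQb in auto)
  have MB1: "measure lborel (ball z r) \<le> 4 * r * r"
    using measure_mono_fmeasurable[OF BQb _ Qb_f] mQb by simp
  have MB2: "measure lborel (ball z r) \<ge> r * r"
  proof -
    have "Qs \<in> sets lborel" using box_fmeas unfolding Qs_def fmeasurable_def by blast
    thus ?thesis using measure_mono_fmeasurable[OF QsB _ ball_f] mQs by simp
  qed
  have low: "r * (r * p / (2 * h)) \<le> measure lborel (sigma \<psi> a b \<inter> Qs)"
    unfolding Qs_def p_def h_def
    by (rule box_lower) (use E e0 r0 h1' p0 p1 hr in auto)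
  have "measure lborel (sigma \<psi> a b \<inter> Qs) \<le> measure lborel (sigma \<psi> a b \<inter> ball z r)"
    by (rule measure_mono_fmeasurable[OF _ _ X_f]) (use QsB sigA_sets[of \<psi> a b "z1 - r/2" "z1 + r/2" "z2 - r/2" "z2 + r/2"] in \<open>auto simp: Qs_def\<close>)
  moreover have "1/8 * measure lborel (ball z r) * (p / h) \<le> 1/8 * (4 * r * r) * (p / h)"
    using MB1 p0 hpos unfolding p_def by (intro mult_right_mono) auto
  moreover have "1/8 * (4 * r * r) * (p / h) = r * (r * p / (2 * h))" by (simp add: field_simps)
  ultimately show "1/8 * measure lborel (ball z r) * (\<psi> (real (hab a b)) / real (hab a b))
              \<le> measure lborel (sigma \<psi> a b \<inter> ball z r)" using low unfolding p_def h_def by linarith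
  have up: "measure lborel (sigma \<psi> a b \<inter> Qb) \<le> (2 * r) * (6 * (2 * r) * p / (e * h))"
    unfolding Qb_def p_def h_def
    by (rule box_upper) (use E e0 e1 r0 h1' p0 p1 hr eh in auto)
  have "measure lborel (sigma \<psi> a b \<inter> ball z r) \<le> measure lborel (sigma \<psi> a b \<inter> Qb)"
    by (rule measure_mono_fmeasurable[OF _ X_sets]) (use BQb Qb_f sigA_sets[of \<psi> a b "z1 - r" "z1 + r" "z2 - r" "z2 + r"] in \<open>auto intro: fmeasurableI2 simp: Qb_def\<close>)
  moreover have "(2 * r) * (6 * (2 * r) * p / (e * h)) = 24 / e * (r * r) * (p / h)"
    using e0 hpos by (simp add: field_simps)
  moreover have "24 / e * (r * r) * (p / h) \<le> 24 / e * measure lborel (ball z r) * (p / h)"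
    using MB2 p0 hpos e0 unfolding p_def by (intro mult_right_mono mult_left_mono) auto
  ultimately show "measure lborel (sigma \<psi> a b \<inter> ball z r)
              \<le> 24 / e * measure lborel (ball z r) * (\<psi> (real (hab a b)) / real (hab a b))"
    using up unfolding p_def h_def by linarith
next
  fix c :: nat assume "sigma_c \<psi> a b c \<inter> ball z r \<noteq> {}"
  then obtain w where w: "w \<in> sigma_c \<psi> a b c \<inter> ball z r" by blast
  show "e / 2 * real (hab a b) < real c" "real c < 2 * real (hab a b)"
    using c_bounds[OF e0 _ B w _ eh p1] e1 h1 by auto
qed

theorem mainTheorem4:
  fixes \<epsilon> :: real
  assumes "0 < \<epsilon>" and "\<epsilon> < 1"
  shows "\<exists>c1 c2 :: real. c1 > 0 \<and> c2 > 0 \<and>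
    (\<forall>\<psi> :: real \<Rightarrow> real.
      (\<forall>h>0. \<psi> h > 0) \<longrightarrow>
      (mono_on {0<..} \<psi> \<or> antimono_on {0<..} \<psi>) \<longrightarrow>
      (\<psi> \<longlongrightarrow> 0) at_top \<longrightarrow>
      (\<forall>(z :: real \<times> real) (r :: real).
         0 < r \<longrightarrow> r < 1 \<longrightarrow> ball z r \<subseteq> {\<epsilon>..1} \<times> {\<epsilon>..1} \<longrightarrow>
         (\<exists>H0 :: real. \<forall>a b :: nat. real (hab a b) \<ge> H0 \<longrightarrow>
            c1 * measure lborel (ball z r) * (\<psi> (real (hab a b)) / real (hab a b))
              \<le> measure lborel (sigma \<psi> a b \<inter> ball z r)
            \<and> measure lborel (sigma \<psi> a b \<inter> ball z r)
              \<le> c2 * measure lborel (ball z r) * (\<psi> (real (hab a b)) / real (hab a b))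
            \<and> (\<forall>c :: nat. sigma_c \<psi> a b c \<inter> ball z r \<noteq> {} \<longrightarrow>
                 \<epsilon> / 2 * real (hab a b) < real c \<and> real c < 2 * real (hab a b)))))"
proof (rule exI[of _ "1/8"], rule exI[of _ "24 / \<epsilon>"], intro conjI allI impI)
  show "(0::real) < 1/8" by simp
  show "0 < 24 / \<epsilon>" using assms by simp
  fix \<psi> :: "real \<Rightarrow> real" and z :: "real \<times> real" and r :: real
  assume pos: "\<forall>h>0. \<psi> h > 0" and lim: "(\<psi> \<longlongrightarrow> 0) at_top"
    and r0: "0 < r" and r1: "r < 1" and B: "ball z r \<subseteq> {\<epsilon>..1} \<times> {\<epsilon>..1}"
  have "eventually (\<lambda>x. \<psi> x < 1/2) at_top" using order_tendstoD(2)[OF lim, of "1/2"] by simp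
  then obtain N where N: "\<And>x. x \<ge> N \<Longrightarrow> \<psi> x < 1/2" by (auto simp: eventually_at_top_linorder)
  show "\<exists>H0 :: real. \<forall>a b :: nat. real (hab a b) \<ge> H0 \<longrightarrow>
            1/8 * measure lborel (ball z r) * (\<psi> (real (hab a b)) / real (hab a b))
              \<le> measure lborel (sigma \<psi> a b \<inter> ball z r)
            \<and> measure lborel (sigma \<psi> a b \<inter> ball z r)
              \<le> 24 / \<epsilon> * measure lborel (ball z r) * (\<psi> (real (hab a b)) / real (hab a b))
            \<and> (\<forall>c :: nat. sigma_c \<psi> a b c \<inter> ball z r \<noteq> {} \<longrightarrow>
                 \<epsilon> / 2 * real (hab a b) < real c \<and> real c < 2 * real (hab a b))"
  proof (intro exI[of _ "max N (max 1 (max (1/\<epsilon>) (24/r)))"] allI impI)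
    fix a b :: nat
    assume H: "max N (max 1 (max (1/\<epsilon>) (24/r))) \<le> real (hab a b)"
    define h where "h = real (hab a b)"
    have hN: "h \<ge> N" and h1: "h \<ge> 1" and he: "h \<ge> 1/\<epsilon>" and hr: "h \<ge> 24/r"
      using H unfolding h_def by auto
    have eh: "\<epsilon> * h \<ge> 1" using he assms by (simp add: field_simps)
    have hr': "h * r \<ge> 24" using hr r0 by (simp add: field_simps)
    have p0: "\<psi> h > 0" using pos h1 by simp
    have p1: "\<psi> h \<le> 1/2" using N[OF hN] by simp
    show "1/8 * measure lborel (ball z r) * (\<psi> (real (hab a b)) / real (hab a b))
              \<le> measure lborel (sigma \<psi> a b \<inter> ball z r)
            \<and> measure lborel (sigma \<psi> a b \<inter> ball z r)
              \<le> 24 / \<epsilon> * measure lborel (ball z r) * (\<psi> (real (hab a b)) / real (hab a b))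
            \<and> (\<forall>c :: nat. sigma_c \<psi> a b c \<inter> ball z r \<noteq> {} \<longrightarrow>
                 \<epsilon> / 2 * real (hab a b) < real c \<and> real c < 2 * real (hab a b))"
      by (rule main_fixed[OF assms r0 B]) (use h1 eh hr' p0 p1 in \<open>simp_all add: h_def\<close>)
  qed
qed

end
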